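(* Let $G=(\mathcal{V},\mathcal{E})$ be a finite graph with $C\ge 2$ classes, in which every node $i$ has a true label $y_i\in\{1,\dots,C\}$, a feature vector $\mathbf{x}_i\in\mathbb{R}^F$, and degree $deg(i)\ge 1$; write $\mathcal{N}(i)$ for the set of neighbours of $i$. Assume: (1) the feature $\mathbf{x}_i$ of each node $i$ is sampled from a distribution $\mathcal{D}_{y_i}$ depending only on its label, with mean $\boldsymbol{\mu}(y_i)$, features of distinct nodes being drawn independently given the labels; (2) the coordinates of $\mathbf{x}_i$ are independent; (3) $\max_k|\mathbf{x}_i[k]|\le B$ for a positive scalar $B$; (4) the (pseudo-)label vector $\hat{\mathbf{y}}_i$ satisfies $\mathbb{E}[\hat{\mathbf{y}}_i]=(1-\epsilon)\mathbf{e}_{y_i}+\frac{\epsilon}{C-1}\sum_{j\ne y_i}\mathbf{e}_j$ for some $\epsilon\in(0,1)$; (5) given $y_i$, the labels $\{y_j: j\in\mathcal{N}(i)\}$ of the neighbours of $i$ are conditionally independent, each equal to $y_i$ with probability $p$ and equal to any given class $c\ne y_i$ with probability $(1-p)/(C-1)$. Define the mixed feature of node $i$ after one Mixup operation by $\mathbf{h}_i=\sum_{j\in\mathcal{N}(i)}\frac{1}{deg(i)}\mathbf{x}_j$. Then, for any node $i\in\mathcal{V}$ (expectations and probabilities being conditional on $y_i$), $$\mathbb{E}[\mathbf{h}_i]=p\,\boldsymbol{\mu}(y_i)+\frac{1-p}{C-1}\sum_{c\ne y_i}\boldsymbol{\mu}(c),$$ and for every $t>0$, $$\mathbb{P}\big(\|\mathbf{h}_i-\mathbb{E}[\mathbf{h}_i]\|_2\ge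 t\big)\le 2F\exp\!\Big(-\frac{deg(i)\,t^2}{2B^2F}\Big).$$
   Context: $\mathbf{e}_c$ denotes the $c$-th standard basis vector of $\mathbb{R}^C$; $\mathbf{x}[k]$ denotes the $k$-th coordinate of a vector $\mathbf{x}$; $F$ is the feature dimension. The Mixup operation replaces a node's feature by the weighted average of its neighbours' features. *)

theory Defs
  imports "HOL-Probability.Probability"
begin

definition neighbours :: "'v set \<Rightarrow> ('v \<Rightarrow> 'v \<Rightarrow> bool) \<Rightarrow> 'v \<Rightarrow> 'v set" where
  "neighbours V E i = {j \<in> V. E i j}"

definition mixup :: "'v set \<Rightarrow> ('v \<Rightarrow> 'a \<Rightarrow> real ^ 'f) \<Rightarrow> 'a \<Rightarrow> real ^ 'f" where
  "mixup Nb X \<omega> = (\<Sum>j\<in>Nb. (1 / real (card Nb)) *\<^sub>R X j \<omega>)"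

end

theory Submission
  imports Defs
begin




lemma norm_coord:
  fixes v :: "real ^ 'f"
  assumes t: "t > 0" and nv: "norm v \<ge> t"
  shows "\<exists>k. \<bar>v $ k\<bar> \<ge> t / sqrt (real CARD('f))"
proof (rule ccontr)
  assume "\<not> ?thesis"
  then have lt: "\<bar>v $ k\<bar> < t / sqrt (real CARD('f))" for k by (metis not_le)
  define s where "s = t / sqrt (real CARD('f))"
  have sq: "(v $ k)\<^sup>2 < s\<^sup>2" for k
  proof -
    have "\<bar>v $ k\<bar>\<^sup>2 < s\<^sup>2" using lt[of k] unfolding s_def
      by (intro power_strict_mono) auto
    then show ?thesis by simp
  qed
  have "(\<Sum>k\<in>UNIV. (v $ k)\<^sup>2) < (\<Sum>k\<in>(UNIV::'f set). s\<^sup>2)"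
    by (rule sum_strict_mono) (auto simp: sq)
  also have "\<dots> = t\<^sup>2" unfolding s_def using t
    by (simp add: power_divide)
  finally have "sqrt (\<Sum>k\<in>UNIV. (v $ k)\<^sup>2) < t"
    using t by (metis abs_of_pos real_sqrt_abs real_sqrt_less_mono)
  moreover have "norm v = sqrt (\<Sum>k\<in>UNIV. (v $ k)\<^sup>2)"
    by (simp add: norm_vec_def L2_set_def)
  ultimately show False using nv by simp
qed

lemma mean_mix:
  fixes M :: "'a measure" and Yj :: "'a \<Rightarrow> nat" and Xj :: "'a \<Rightarrow> real ^ 'f"
    and D :: "nat \<Rightarrow> (real ^ 'f) measure" and S :: "nat set"
  assumes M: "prob_space M"
    and Ym[measurable]: "Yj \<in> measurable M (count_space UNIV)"
    and Xm[measurable]: "Xj \<in> borel_measurable M"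
    and Xint: "integrable M Xj"
    and finS: "finite S"
    and Yr: "\<And>\<omega>. \<omega> \<in> space M \<Longrightarrow> Yj \<omega> \<in> S"
    and Dp: "\<And>c. c \<in> S \<Longrightarrow> prob_space (D c)"
    and Ds: "\<And>c. c \<in> S \<Longrightarrow> sets (D c) = sets borel"
    and XY: "\<And>c A. c \<in> S \<Longrightarrow> A \<in> sets borel \<Longrightarrow>
           measure M {\<omega> \<in> space M. Yj \<omega> = c \<and> Xj \<omega> \<in> A}
             = measure M {\<omega> \<in> space M. Yj \<omega> = c} * measure (D c) A"
  shows "integral\<^sup>L M Xj = (\<Sum>c\<in>S. measure M {\<omega> \<in> space M. Yj \<omega> = c} *\<^sub>R (\<integral>x. x \<partial>D c))"
proof -
  interpret prob_space M by (rule M)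
  have Pm[measurable]: "{\<omega> \<in> space M. Yj \<omega> = c} \<in> sets M" for c by measurable
  have part: "integral\<^sup>L M (\<lambda>\<omega>. indicator {\<omega> \<in> space M. Yj \<omega> = c} \<omega> *\<^sub>R Xj \<omega>)
      = measure M {\<omega> \<in> space M. Yj \<omega> = c} *\<^sub>R (\<integral>x. x \<partial>D c)" if c: "c \<in> S" for c
  proof -
    define P where "P = {\<omega> \<in> space M. Yj \<omega> = c}"
    define r where "r = measure M P"
    have P[measurable]: "P \<in> sets M" unfolding P_def by measurable
    interpret D: prob_space "D c" using Dp c .
    have r0: "r \<ge> 0" unfolding r_def by simp
    have eq: "distr (density M (indicator P)) borel Xj = density (D c) (\<lambda>_. ennreal r)"
    proof (rule measure_eqI)
      show "sets (distr (density M (indicator P)) borel Xj) = sets (density (D c) (\<lambda>_. ennreal r))"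
        using Ds[OF c] by simp
    next
      fix A assume "A \<in> sets (distr (density M (indicator P)) borel Xj)"
      then have A[measurable]: "A \<in> sets borel" by simp
      have AD: "A \<in> sets (D c)" using Ds[OF c] A by simp
      have "emeasure (distr (density M (indicator P)) borel Xj) A
          = emeasure (density M (indicator P)) (Xj -` A \<inter> space M)"
        by (subst emeasure_distr) auto
      also have "\<dots> = emeasure M (P \<inter> (Xj -` A \<inter> space M))"
        by (rule emeasure_restricted) (auto simp: P)
      also have "P \<inter> (Xj -` A \<inter> space M) = {\<omega> \<in> space M. Yj \<omega> = c \<and> Xj \<omega> \<in> A}"
        unfolding P_def by auto
      also have "emeasure M \<dots> = ennreal (measure M \<dots>)"
        by (simp add: emeasure_eq_measure)
      also have "\<dots> = ennreal (r * measure (D c) A)"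
        using XY[OF c A] unfolding r_def P_def by simp
      also have "\<dots> = emeasure (density (D c) (\<lambda>_. ennreal r)) A"
      proof -
        have "emeasure (density (D c) (\<lambda>_. ennreal r)) A = (\<integral>\<^sup>+ x. ennreal r * indicator A x \<partial>D c)"
          using AD by (subst emeasure_density) auto
        also have "\<dots> = ennreal r * emeasure (D c) A"
          using AD by (rule nn_integral_cmult_indicator)
        also have "\<dots> = ennreal (r * measure (D c) A)"
          using r0 by (simp add: D.emeasure_eq_measure ennreal_mult)
        finally show ?thesis by simp
      qed
      finally show "emeasure (distr (density M (indicator P)) borel Xj) A = emeasure (density (D c) (\<lambda>_. ennreal r)) A" .
    qed
    have "integral\<^sup>L M (\<lambda>\<omega>. indicator P \<omega> *\<^sub>R Xj \<omega>)
        = integral\<^sup>L (density M (\<lambda>\<omega>. ennreal (indicator P \<omega>))) Xj"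
      by (rule integral_density[symmetric]) auto
    also have "\<dots> = integral\<^sup>L (density M (indicator P)) Xj"
      by (simp add: ennreal_indicator)
    also have "\<dots> = integral\<^sup>L (distr (density M (indicator P)) borel Xj) (\<lambda>x. x)"
      by (rule integral_distr[symmetric]) auto
    also have "\<dots> = integral\<^sup>L (density (D c) (\<lambda>_. ennreal r)) (\<lambda>x. x)"
      by (simp add: eq)
    also have "\<dots> = integral\<^sup>L (D c) (\<lambda>x. r *\<^sub>R x)"
    proof (rule integral_density)
      show "(\<lambda>x::real^'f. x) \<in> borel_measurable (D c)"
        by (subst measurable_cong_sets[OF Ds[OF c] refl]) simp
    qed (use r0 in auto)
    also have "\<dots> = r *\<^sub>R (\<integral>x. x \<partial>D c)" by simp
    finally show ?thesis unfolding P_def r_def .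
  qed
  have "integral\<^sup>L M Xj = integral\<^sup>L M (\<lambda>\<omega>. \<Sum>c\<in>S. indicator {\<omega> \<in> space M. Yj \<omega> = c} \<omega> *\<^sub>R Xj \<omega>)"
  proof (rule Bochner_Integration.integral_cong[OF refl])
    fix \<omega> assume w: "\<omega> \<in> space M"
    have "(\<Sum>c\<in>S. indicator {\<omega> \<in> space M. Yj \<omega> = c} \<omega> *\<^sub>R Xj \<omega>)
        = (\<Sum>c\<in>S. (if c = Yj \<omega> then Xj \<omega> else 0))"
      by (rule sum.cong) (auto simp: indicator_def w)
    also have "\<dots> = Xj \<omega>" using Yr[OF w] finS by (simp add: sum.delta')
    finally show "Xj \<omega> = (\<Sum>c\<in>S. indicator {\<omega> \<in> space M. Yj \<omega> = c} \<omega> *\<^sub>R Xj \<omega>)" by simp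
  qed
  also have "\<dots> = (\<Sum>c\<in>S. integral\<^sup>L M (\<lambda>\<omega>. indicator {\<omega> \<in> space M. Yj \<omega> = c} \<omega> *\<^sub>R Xj \<omega>))"
    by (rule Bochner_Integration.integral_sum) (intro integrable_mult_indicator Pm Xint)
  also have "\<dots> = (\<Sum>c\<in>S. measure M {\<omega> \<in> space M. Yj \<omega> = c} *\<^sub>R (\<integral>x. x \<partial>D c))"
    by (rule sum.cong) (auto simp: part)
  finally show ?thesis .
qed



theorem theorem1:
  fixes V :: "'v set" and E :: "'v \<Rightarrow> 'v \<Rightarrow> bool" and i :: 'v
    and C :: nat and yi :: nat and p :: real and \<epsilon> :: real and B :: real
    and M :: "'a measure"
    and Y :: "'v \<Rightarrow> 'a \<Rightarrow> nat"
    and X :: "'v \<Rightarrow> 'a \<Rightarrow> real ^ 'f"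
    and Yhat :: "'a \<Rightarrow> nat \<Rightarrow> real"
    and D :: "nat \<Rightarrow> (real ^ 'f) measure"
  assumes finV: "finite V"
    and symE: "\<And>u w. E u w \<Longrightarrow> E w u"
    and irrE: "\<And>u. \<not> E u u"
    and deg_pos: "\<And>u. u \<in> V \<Longrightarrow> card (neighbours V E u) \<ge> 1"
    and iV: "i \<in> V"
    and C2: "C \<ge> 2"
    and yi: "yi \<in> {1..C}"
    and B: "B > 0"
    and M: "prob_space M"
    (* (1) class-conditional feature distributions D c with mean \<mu>(c) = integral of D c *)
    and D_prob: "\<And>c. c \<in> {1..C} \<Longrightarrow> prob_space (D c)"
    and D_sets: "\<And>c. c \<in> {1..C} \<Longrightarrow> sets (D c) = sets borel"
    (* (2) coordinates of the features are independent *)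
    and D_coord_indep: "\<And>c. c \<in> {1..C} \<Longrightarrow>
           prob_space.indep_vars (D c) (\<lambda>_. borel) (\<lambda>k x. x $ k) UNIV"
    (* (3) bounded features *)
    and D_bounded: "\<And>c. c \<in> {1..C} \<Longrightarrow> AE x in D c. \<forall>k. \<bar>x $ k\<bar> \<le> B"
    and X_bounded: "\<And>j. j \<in> neighbours V E i \<Longrightarrow> AE \<omega> in M. \<forall>k. \<bar>X j \<omega> $ k\<bar> \<le> B"
    (* random variables: neighbour labels and features *)
    and Y_meas: "\<And>j. j \<in> neighbours V E i \<Longrightarrow> Y j \<in> measurable M (count_space UNIV)"
    and X_meas: "\<And>j. j \<in> neighbours V E i \<Longrightarrow> X j \<in> borel_measurable M"
    and Y_range: "\<And>j \<omega>. j \<in> neighbours V E i \<Longrightarrow> \<omega> \<in> space M \<Longrightarrow> Y j \<omega> \<in> {1..C}"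
    (* (1) given its label c, the feature of neighbour j is distributed as D c *)
    and X_given_Y: "\<And>j c A. j \<in> neighbours V E i \<Longrightarrow> c \<in> {1..C} \<Longrightarrow> A \<in> sets borel \<Longrightarrow>
           measure M {\<omega> \<in> space M. Y j \<omega> = c \<and> X j \<omega> \<in> A}
             = measure M {\<omega> \<in> space M. Y j \<omega> = c} * measure (D c) A"
    (* (1)+(5) independence across distinct neighbours (labels and features) *)
    and indep: "prob_space.indep_vars M (\<lambda>_. count_space UNIV \<Otimes>\<^sub>M borel)
           (\<lambda>j \<omega>. (Y j \<omega>, X j \<omega>)) (neighbours V E i)"
    (* (5) neighbour label law given y_i = yi *)
    and p: "0 \<le> p" "p \<le> 1"
    and Y_law: "\<And>j c. j \<in> neighbours V E i \<Longrightarrow> c \<in> {1..C} \<Longrightarrow>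
           measure M {\<omega> \<in> space M. Y j \<omega> = c} = (if c = yi then p else (1 - p) / (C - 1))"
    (* (4) pseudo-label vector of node i *)
    and eps: "0 < \<epsilon>" "\<epsilon> < 1"
    and Yhat_int: "\<And>c. c \<in> {1..C} \<Longrightarrow> integrable M (\<lambda>\<omega>. Yhat \<omega> c)"
    and Yhat_mean: "\<And>c. c \<in> {1..C} \<Longrightarrow>
           prob_space.expectation M (\<lambda>\<omega>. Yhat \<omega> c) = (if c = yi then 1 - \<epsilon> else \<epsilon> / (C - 1))"
  shows "prob_space.expectation M (mixup (neighbours V E i) X)
           = p *\<^sub>R (\<integral>x. x \<partial>D yi)
             + ((1 - p) / (C - 1)) *\<^sub>R (\<Sum>c\<in>{1..C} - {yi}. (\<integral>x. x \<partial>D c))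
         \<and> (\<forall>t>0.
           measure M {\<omega> \<in> space M.
              norm (mixup (neighbours V E i) X \<omega> - prob_space.expectation M (mixup (neighbours V E i) X)) \<ge> t}
           \<le> 2 * real CARD('f) *
              exp (- (real (card (neighbours V E i)) * t\<^sup>2) / (2 * B\<^sup>2 * real CARD('f))))"
  proof -
  interpret prob_space M by (rule M)
  define N where "N = neighbours V E i"
  define n where "n = card N"
  define \<mu> where "\<mu> = (\<lambda>c. (\<integral>x. x \<partial>D c) :: real ^ 'f)"
  define v where "v = p *\<^sub>R \<mu> yi + ((1 - p) / (C - 1)) *\<^sub>R (\<Sum>c\<in>{1..C} - {yi}. \<mu> c)"
  have finN: "finite N" unfolding N_def neighbours_def using finV by simp
  have n1: "n \<ge> 1" unfolding n_def N_def using deg_pos[OF iV] .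
  have Xm[measurable]: "X j \<in> borel_measurable M" if "j \<in> N" for j
    using X_meas that unfolding N_def by simp
  have Xb: "AE \<omega> in M. norm (X j \<omega>) \<le> real CARD('f) * B" if j: "j \<in> N" for j
    using X_bounded[OF j[unfolded N_def]]
  proof (elim AE_mp, intro AE_I2 impI)
    fix \<omega> assume "\<forall>k. \<bar>X j \<omega> $ k\<bar> \<le> B"
    then have "(\<Sum>k\<in>UNIV. \<bar>X j \<omega> $ k\<bar>) \<le> real CARD('f) * B"
      using sum_bounded_above[of UNIV "\<lambda>k. \<bar>X j \<omega> $ k\<bar>" B] by simp
    then show "norm (X j \<omega>) \<le> real CARD('f) * B"
      using norm_le_l1_cart[of "X j \<omega>"] by linarith
  qed
  have Xint: "integrable M (X j)" if "j \<in> N" for j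
    using Xb[OF that] Xm[OF that]
    by (intro finite_measure.integrable_const_bound[OF finite_measure_axioms]) auto
  have EX: "expectation (X j) = v" if j: "j \<in> N" for j
  proof -
    have "expectation (X j) = (\<Sum>c\<in>{1..C}. measure M {\<omega> \<in> space M. Y j \<omega> = c} *\<^sub>R \<mu> c)"
      unfolding \<mu>_def
    proof (rule mean_mix[OF M _ Xm[OF j] Xint[OF j]])
      show "Y j \<in> measurable M (count_space UNIV)" using Y_meas j unfolding N_def by simp
    qed (use j D_prob D_sets Y_range X_given_Y in \<open>auto simp: N_def\<close>)
    also have "\<dots> = (\<Sum>c\<in>{1..C}. (if c = yi then p else (1 - p) / (C - 1)) *\<^sub>R \<mu> c)"
      using Y_law j unfolding N_def by (intro sum.cong) auto
    also have "\<dots> = p *\<^sub>R \<mu> yi + (\<Sum>c\<in>{1..C} - {yi}. ((1 - p) / (C - 1)) *\<^sub>R \<mu> c)"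
      using yi by (subst sum.remove[of _ yi]) (auto intro!: sum.cong)
    also have "\<dots> = v" unfolding v_def by (simp add: scaleR_sum_right)
    finally show ?thesis .
  qed
  have hm[measurable]: "mixup N X \<in> borel_measurable M"
    unfolding mixup_def[abs_def] by (intro borel_measurable_sum borel_measurable_scaleR Xm) auto
  have Eh: "expectation (mixup N X) = v"
  proof -
    have "expectation (mixup N X) = (\<Sum>j\<in>N. expectation (\<lambda>\<omega>. (1 / real n) *\<^sub>R X j \<omega>))"
      unfolding mixup_def[abs_def] n_def
      by (rule Bochner_Integration.integral_sum) (auto intro: Xint)
    also have "\<dots> = (\<Sum>j\<in>N. (1 / real n) *\<^sub>R v)"
      by (intro sum.cong) (auto simp: EX)
    also have "\<dots> = v" using n1 unfolding n_def
      by (simp only: sum_constant_scaleR scaleR_scaleR) simp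
    finally show ?thesis .
  qed
  have part2: "measure M {\<omega> \<in> space M. norm (mixup N X \<omega> - v) \<ge> t}
      \<le> 2 * real CARD('f) * exp (- (real n * t\<^sup>2) / (2 * B\<^sup>2 * real CARD('f)))"
    if t: "t > 0" for t
  proof -
    define F where "F = real CARD('f)"
    define s where "s = t / sqrt F"
    define bnd where "bnd = 2 * exp (- (real n * t\<^sup>2) / (2 * B\<^sup>2 * F))"
    have F0: "F > 0" unfolding F_def by simp
    have s0: "s > 0" unfolding s_def using t F0 by simp
    have comp: "measure M {\<omega> \<in> space M. \<bar>mixup N X \<omega> $ k - v $ k\<bar> \<ge> s} \<le> bnd" for k
    proof -
      have EXk: "expectation (\<lambda>\<omega>. X j \<omega> $ k) = v $ k" if j: "j \<in> N" for j
        using integral_bounded_linear[OF bounded_linear_vec_nth Xint[OF j], of k] EX[OF j] by simp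
      interpret H: Hoeffding_ineq M N "\<lambda>j \<omega>. X j \<omega> $ k" "\<lambda>_. -B" "\<lambda>_. B" "real n * v $ k"
      proof unfold_locales
        show "finite N" by (rule finN)
      next
        show "indep_vars (\<lambda>_. borel) (\<lambda>j \<omega>. X j \<omega> $ k) N"
        proof -
          have m: "(\<lambda>z. snd z $ k) \<in> borel_measurable (count_space UNIV \<Otimes>\<^sub>M (borel :: (real ^ 'f) measure))"
            if "j \<in> N" for j :: 'v
            by (rule measurable_compose[OF measurable_snd borel_measurable_nth])
          show ?thesis
            using indep_vars_compose2[OF indep[folded N_def] m] by simp
        qed
      next
        fix j assume j: "j \<in> N"
        show "AE \<omega> in M. X j \<omega> $ k \<in> {- B..B}"
          using X_bounded[OF j[unfolded N_def]]
        proof eventually_elim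
          case (elim \<omega>)
          then have "\<bar>X j \<omega> $ k\<bar> \<le> B" by blast
          then show ?case by (auto simp: abs_le_iff)
        qed
      qed (simp add: EXk n_def)
      have sumeq: "(\<Sum>j\<in>N. (B - - B)\<^sup>2) = real n * (4 * B\<^sup>2)"
        unfolding n_def by (simp add: power2_eq_square)
      have "real n * (4 * B\<^sup>2) > 0" using n1 B by simp
      then have pos: "(\<Sum>j\<in>N. (B - - B)\<^sup>2) > 0" using sumeq by linarith
      have H: "prob {\<omega> \<in> space M. \<bar>(\<Sum>j\<in>N. X j \<omega> $ k) - real n * v $ k\<bar> \<ge> real n * s}
          \<le> 2 * exp (-2 * (real n * s)\<^sup>2 / (\<Sum>j\<in>N. (B - - B)\<^sup>2))"
        by (rule H.Hoeffding_ineq_abs_ge) (use s0 pos in auto)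
      have seteq: "{\<omega> \<in> space M. \<bar>mixup N X \<omega> $ k - v $ k\<bar> \<ge> s}
          = {\<omega> \<in> space M. \<bar>(\<Sum>j\<in>N. X j \<omega> $ k) - real n * v $ k\<bar> \<ge> real n * s}"
      proof -
        have "\<bar>mixup N X \<omega> $ k - v $ k\<bar> \<ge> s \<longleftrightarrow> \<bar>(\<Sum>j\<in>N. X j \<omega> $ k) - real n * v $ k\<bar> \<ge> real n * s"
          for \<omega>
        proof -
          have nn: "real n > 0" using n1 by simp
          have "mixup N X \<omega> $ k = (\<Sum>j\<in>N. X j \<omega> $ k) / real n"
            unfolding mixup_def n_def by (simp add: sum_component sum_divide_distrib)
          then have "mixup N X \<omega> $ k - v $ k = ((\<Sum>j\<in>N. X j \<omega> $ k) - real n * v $ k) / real n"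
            using nn by (simp add: field_simps)
          then show ?thesis using nn
            by (simp add: abs_divide pos_le_divide_eq mult.commute)
        qed
        then show ?thesis by simp
      qed
      from sumeq have "2 * exp (-2 * (real n * s)\<^sup>2 / (\<Sum>j\<in>N. (B - - B)\<^sup>2)) = bnd"
        unfolding bnd_def s_def using F0 B n1
        by (simp add: power_divide power2_eq_square field_simps)
      then show ?thesis using H seteq by simp
    qed
    have sub: "{\<omega> \<in> space M. norm (mixup N X \<omega> - v) \<ge> t}
        \<subseteq> (\<Union>k. {\<omega> \<in> space M. \<bar>mixup N X \<omega> $ k - v $ k\<bar> \<ge> s})"
    proof
      fix \<omega> assume "\<omega> \<in> {\<omega> \<in> space M. norm (mixup N X \<omega> - v) \<ge> t}"
      then have w: "\<omega> \<in> space M" and nv: "norm (mixup N X \<omega> - v) \<ge> t" by auto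
      obtain k where "\<bar>(mixup N X \<omega> - v) $ k\<bar> \<ge> s"
        using norm_coord[OF t nv] unfolding s_def F_def by blast
      then show "\<omega> \<in> (\<Union>k. {\<omega> \<in> space M. \<bar>mixup N X \<omega> $ k - v $ k\<bar> \<ge> s})"
        using w by auto
    qed
    have "measure M {\<omega> \<in> space M. norm (mixup N X \<omega> - v) \<ge> t}
        \<le> measure M (\<Union>k. {\<omega> \<in> space M. \<bar>mixup N X \<omega> $ k - v $ k\<bar> \<ge> s})"
      by (rule finite_measure_mono[OF sub]) measurable
    also have "\<dots> \<le> (\<Sum>k\<in>UNIV. measure M {\<omega> \<in> space M. \<bar>mixup N X \<omega> $ k - v $ k\<bar> \<ge> s})"
      by (rule measure_UNION_le) auto
    also have "\<dots> \<le> (\<Sum>k\<in>(UNIV::'f set). bnd)"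
      by (rule sum_mono) (rule comp)
    also have "\<dots> = 2 * real CARD('f) * exp (- (real n * t\<^sup>2) / (2 * B\<^sup>2 * real CARD('f)))"
      unfolding bnd_def F_def by simp
    finally show ?thesis .
  qed
  show ?thesis
    using Eh part2 unfolding N_def n_def v_def \<mu>_def by auto
qed

end
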